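(* Let $S_2=\epsilon_2$, $S_3=\epsilon_3$ and $S_n=K_{n-3}+\epsilon_3$ for $n\ge4$, and let $R(r)=\frac{1}{2\sqrt{1-r^2}}$ with $R^j$ its $j$-fold composition ($R^0$ the identity). For $n\in\{2,3\}$, $S_n$ admits a spherical embedding of dimension $n-1$ and radius $r$ for every $0<r<1$. For $n\ge4$, $S_n$ admits a spherical embedding of dimension $n-1$ and radius $r$ for every $r$ with $R^{n-4}(1/2)<r<1$, but admits no spherical embedding of dimension $n-1$ and radius $r$ with $r<R^{n-4}(1/2)$.
   Context: $\epsilon_k$ is the graph with $k$ vertices and no edges; $G+H$ is obtained from disjoint copies of $G$ and $H$ by adding all edges between them. A unit-distance embedding of a graph $G$ in $\mathbb{R}^n$ is an injective map $f$ from the vertex set of $G$ to $\mathbb{R}^n$ such that $|f(u)-f(v)|=1$ for every edge $uv$ and no point $f(w)$ lies on the segment $[f(u),f(v)]$ for an edge $uv$ with $w\notin\{u,v\}$. $G$ admits a spherical embedding of dimension $k$ and radius $r$ if $G$ has a unit-distance embedding in $\mathbb{R}^k$ all of whose vertices lie on a sphere $\{x\in\mathbb{R}^k:|x-c|=r\}$. *)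

theory Defs
  imports "HOL-Analysis.Analysis"
begin

text \<open>Points of R^k are represented as functions nat => real vanishing at
  coordinates i >= k (coordinates 0..k-1).\<close>

definition in_Rn :: "nat \<Rightarrow> (nat \<Rightarrow> real) \<Rightarrow> bool" where
  "in_Rn k x \<longleftrightarrow> (\<forall>i\<ge>k. x i = 0)"

definition edist :: "nat \<Rightarrow> (nat \<Rightarrow> real) \<Rightarrow> (nat \<Rightarrow> real) \<Rightarrow> real" where
  "edist k x y = sqrt (\<Sum>i<k. (x i - y i)^2)"

definition on_segment :: "(nat \<Rightarrow> real) \<Rightarrow> (nat \<Rightarrow> real) \<Rightarrow> (nat \<Rightarrow> real) \<Rightarrow> bool" where
  "on_segment w x y \<longleftrightarrow> (\<exists>t::real. 0 \<le> t \<and> t \<le> 1 \<and> (\<forall>i. w i = (1 - t) * x i + t * y i))"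

text \<open>A simple graph is given by a vertex set V and a symmetric irreflexive adjacency E.\<close>

definition unit_distance_embedding ::
  "'a set \<Rightarrow> ('a \<Rightarrow> 'a \<Rightarrow> bool) \<Rightarrow> nat \<Rightarrow> ('a \<Rightarrow> nat \<Rightarrow> real) \<Rightarrow> bool" where
  "unit_distance_embedding V E k f \<longleftrightarrow>
     inj_on f V \<and> (\<forall>v\<in>V. in_Rn k (f v)) \<and>
     (\<forall>u\<in>V. \<forall>v\<in>V. E u v \<longrightarrow> edist k (f u) (f v) = 1) \<and>
     (\<forall>u\<in>V. \<forall>v\<in>V. \<forall>w\<in>V. E u v \<and> w \<noteq> u \<and> w \<noteq> v \<longrightarrow> \<not> on_segment (f w) (f u) (f v))"

definition spherical_embedding ::
  "'a set \<Rightarrow> ('a \<Rightarrow> 'a \<Rightarrow> bool) \<Rightarrow> nat \<Rightarrow> real \<Rightarrow> bool" where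
  "spherical_embedding V E k r \<longleftrightarrow>
     (\<exists>f c. unit_distance_embedding V E k f \<and> in_Rn k c \<and>
            (\<forall>v\<in>V. edist k (f v) c = r))"

text \<open>The graph S_n on vertex set {0..<n}: for n >= 4 it is K_{n-3} + eps_3, with
  the clique on {0..<n-3} and the independent triple {n-3,n-2,n-1}; two distinct
  vertices are adjacent iff at least one of them lies in the clique part.
  For n <= 3 (n-3 = 0 in nat) there are no edges, i.e. S_n = eps_n.\<close>

definition S_vert :: "nat \<Rightarrow> nat set" where
  "S_vert n = {0..<n}"

definition S_adj :: "nat \<Rightarrow> nat \<Rightarrow> nat \<Rightarrow> bool" where
  "S_adj n u v \<longleftrightarrow> u \<noteq> v \<and> u < n \<and> v < n \<and> (u < n - 3 \<or> v < n - 3)"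

definition Rfun :: "real \<Rightarrow> real" where
  "Rfun r = 1 / (2 * sqrt (1 - r^2))"

end

theory Submission
  imports Defs
begin


lemma edist_eq_iff:
  assumes "r \<ge> 0"
  shows "edist k x y = r \<longleftrightarrow> (\<Sum>i<k. (x i - y i)^2) = r^2"
proof -
  have nn: "(\<Sum>i<k. (x i - y i)^2) \<ge> 0" by (intro sum_nonneg) auto
  show ?thesis unfolding edist_def
  proof
    assume "sqrt (\<Sum>i<k. (x i - y i)^2) = r"
    then show "(\<Sum>i<k. (x i - y i)^2) = r^2" using nn by (metis real_sqrt_pow2)
  next
    assume "(\<Sum>i<k. (x i - y i)^2) = r^2"
    then show "sqrt (\<Sum>i<k. (x i - y i)^2) = r" using assms by simp
  qed
qed

lemma id1: "((1-t)*a + t*b - c)^2 = (1-t)*(a - c)^2 + t*(b - c)^2 - t*(1-t)*(a - b)^2" for t a b c :: real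
  by algebra

lemma segment_sphere:
  fixes x y w c :: "nat \<Rightarrow> real" and t R :: real
  assumes "(\<Sum>i<k. (x i - c i)^2) = R" "(\<Sum>i<k. (y i - c i)^2) = R"
     "(\<Sum>i<k. (w i - c i)^2) = R" "(\<Sum>i<k. (x i - y i)^2) = 1"
     "\<forall>i. w i = (1 - t) * x i + t * y i"
  shows "t = 0 \<or> t = 1"
proof -
  have key: "(w i - c i)^2 = (1-t)*(x i - c i)^2 + t*(y i - c i)^2 - t*(1-t)*(x i - y i)^2" for i
  proof -
    have "w i = (1-t)*x i + t*y i" using assms(5) by simp
    then show ?thesis using id1[of t "x i" "y i" "c i"] by simp
  qed
  have "(\<Sum>i<k. (w i - c i)^2) = (1-t)*(\<Sum>i<k. (x i - c i)^2) + t*(\<Sum>i<k. (y i - c i)^2) - t*(1-t)*(\<Sum>i<k. (x i - y i)^2)"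
    by (simp add: key sum.distrib sum_subtractf sum_distrib_left)
  then have "R = (1-t)*R + t*R - t*(1-t)" using assms(1-4) by simp
  then have "t*(1-t) = 0" by (simp add: algebra_simps)
  then show ?thesis by auto
qed

lemma sph_emb_intro:
  assumes inj: "inj_on f V" and inr: "\<forall>v\<in>V. in_Rn k (f v)" and inc: "in_Rn k c" and r0: "r \<ge> 0"
   and sph: "\<forall>v\<in>V. (\<Sum>i<k. (f v i - c i)^2) = r^2"
   and edge: "\<forall>u\<in>V. \<forall>v\<in>V. E u v \<longrightarrow> (\<Sum>i<k. (f u i - f v i)^2) = 1"
  shows "spherical_embedding V E k r"
proof -
  have seg: "\<forall>u\<in>V. \<forall>v\<in>V. \<forall>w\<in>V. E u v \<and> w \<noteq> u \<and> w \<noteq> v \<longrightarrow> \<not> on_segment (f w) (f u) (f v)"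
  proof (intro ballI impI notI)
    fix u v w assume uvw: "u \<in> V" "v \<in> V" "w \<in> V" and e: "E u v \<and> w \<noteq> u \<and> w \<noteq> v"
      and os: "on_segment (f w) (f u) (f v)"
    then obtain t where t: "\<forall>i. f w i = (1 - t) * f u i + t * f v i" unfolding on_segment_def by blast
    have "t = 0 \<or> t = 1"
      by (rule segment_sphere[where k=k and x="f u" and c=c and R="r^2" and y="f v" and w="f w"]) (use sph edge uvw e t in auto)
    then have "f w = f u \<or> f w = f v" using t by auto
    then show False using inj uvw e by (metis inj_on_def)
  qed
  show ?thesis unfolding spherical_embedding_def unit_distance_embedding_def
    using assms seg edist_eq_iff[OF r0] edist_eq_iff[of 1] by auto
qed

lemma half_inv_sqrt: "(a::real) \<ge> 0 \<Longrightarrow> 1 / (2 * sqrt a) = sqrt (1 / (4 * a))"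
  by (simp add: real_sqrt_divide real_sqrt_mult)

lemma Rfun_iter: "(Rfun ^^ j) (1/2) = sqrt ((real j + 1) / (2 * (real j + 2)))"
proof (induction j)
  case 0
  then show ?case by (simp add: real_sqrt_divide)
next
  case (Suc j)
  have pos: "2 * real j + 4 > 0" "real j + 3 > 0" "real j + 2 > 0" by linarith+
  have a: "1 - (real j + 1) / (2 * (real j + 2)) = (real j + 3) / (2 * (real j + 2))"
    using pos(1) by (simp add: field_simps)
  have q0: "(real j + 1) / (2 * (real j + 2)) \<ge> 0" by simp
  have "(Rfun ^^ Suc j) (1/2) = Rfun (sqrt ((real j + 1) / (2 * (real j + 2))))"
    by (simp only: funpow.simps comp_def Suc.IH)
  also have "\<dots> = 1 / (2 * sqrt (1 - (real j + 1) / (2 * (real j + 2))))"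
    unfolding Rfun_def using q0 by (simp only: real_sqrt_pow2)
  also have "\<dots> = 1 / (2 * sqrt ((real j + 3) / (2 * (real j + 2))))"
    by (simp only: a)
  also have "\<dots> = sqrt (1 / (4 * ((real j + 3) / (2 * (real j + 2)))))"
    by (rule half_inv_sqrt) simp
  also have "1 / (4 * ((real j + 3) / (2 * (real j + 2)))) = (real (Suc j) + 1) / (2 * (real (Suc j) + 2))"
    using pos by (simp add: field_simps)
  finally show ?case .
qed

lemma simplex_bound:
  fixes q :: "nat \<Rightarrow> nat \<Rightarrow> real"
  assumes d: "\<forall>a<K. \<forall>b<K. a \<noteq> b \<longrightarrow> (\<Sum>i<N. (q a i - q b i)^2) = 1"
     and s: "\<forall>a<K. (\<Sum>i<N. (q a i - c i)^2) = R"
  shows "real K * (real K - 1) \<le> 2 * real K * (real K * R)"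
proof -
  have per: "(\<Sum>a<K. \<Sum>b<K. (q a i - q b i)^2) \<le> 2*real K*(\<Sum>a<K. (q a i - c i)^2)" for i
  proof -
    define y where "y a = q a i - c i" for a
    have e: "q a i - q b i = y a - y b" for a b by (simp add: y_def)
    have "(\<Sum>a<K. \<Sum>b<K. (y a - y b)^2) = (\<Sum>a<K. \<Sum>b<K. (y a)^2 + (y b)^2 - 2 * y a * y b)"
      by (simp add: power2_eq_square algebra_simps)
    also have "\<dots> = 2*real K*(\<Sum>a<K. (y a)^2) - 2 * (\<Sum>a<K. y a)^2"
      by (simp add: sum.distrib sum_subtractf sum_distrib_left sum_distrib_right power2_eq_square algebra_simps)
    also have "\<dots> \<le> 2*real K*(\<Sum>a<K. (y a)^2)" by simp
    finally show ?thesis by (simp add: y_def)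
  qed
  have "(\<Sum>i<N. \<Sum>a<K. \<Sum>b<K. (q a i - q b i)^2) \<le> (\<Sum>i<N. 2*real K*(\<Sum>a<K. (q a i - c i)^2))"
    by (rule sum_mono) (rule per)
  also have "\<dots> = 2*real K*(\<Sum>i<N. \<Sum>a<K. (q a i - c i)^2)"
    by (simp add: sum_distrib_left)
  also have "\<dots> = 2*real K*(\<Sum>a<K. \<Sum>i<N. (q a i - c i)^2)"
    by (subst sum.swap) (rule refl)
  also have "\<dots> = 2*real K*(real K * R)" using s by simp
  finally have A: "(\<Sum>i<N. \<Sum>a<K. \<Sum>b<K. (q a i - q b i)^2) \<le> 2*real K*(real K * R)" .
  have "(\<Sum>i<N. \<Sum>a<K. \<Sum>b<K. (q a i - q b i)^2) = (\<Sum>a<K. \<Sum>i<N. \<Sum>b<K. (q a i - q b i)^2)"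
    by (rule sum.swap)
  also have "\<dots> = (\<Sum>a<K. \<Sum>b<K. \<Sum>i<N. (q a i - q b i)^2)"
    by (rule sum.cong[OF refl], rule sum.swap)
  also have "\<dots> = (\<Sum>a<K. \<Sum>b<K. 1 - (if b = a then 1 else 0))"
    using d by (intro sum.cong refl) auto
  also have "\<dots> = (\<Sum>a<K. real K - 1)"
    by (intro sum.cong refl) (simp add: sum_subtractf)
  also have "\<dots> = real K * (real K - 1)" by simp
  finally show ?thesis using A by simp
qed



lemma small_emb:
  assumes n: "n = 2 \<or> n = 3" and r: "0 < r"
  shows "spherical_embedding (S_vert n) (S_adj n) (n - 1) r"
proof -
  define f where "f v = (\<lambda>j::nat. if j = 0 then (if v = (0::nat) then r else if v = 1 then -r else 0)
      else if j = 1 then (if v = 2 then r else 0) else (0::real))" for v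
  define c where "c = (\<lambda>j::nat. 0::real)"
  have noE: "\<not> S_adj n u v" for u v using n by (auto simp: S_adj_def)
  have V: "S_vert n \<subseteq> {0,1,2}" using n by (auto simp: S_vert_def)
  have inj: "inj_on f (S_vert n)"
  proof (rule inj_onI)
    fix u v assume uv: "u \<in> S_vert n" "v \<in> S_vert n" "f u = f v"
    then have "f u 0 = f v 0" "f u 1 = f v 1" by auto
    moreover have "u = 0 \<or> u = 1 \<or> u = 2" "v = 0 \<or> v = 1 \<or> v = 2" using uv(1,2) V by auto
    ultimately show "u = v" using r by (auto simp: f_def)
  qed
  show ?thesis
  proof (rule sph_emb_intro[where f=f and c=c])
    show "inj_on f (S_vert n)" by (rule inj)
    show "\<forall>v\<in>S_vert n. in_Rn (n - 1) (f v)"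
    proof (intro ballI)
      fix v assume "v \<in> S_vert n"
      then have vn: "v < n" by (simp add: S_vert_def)
      show "in_Rn (n - 1) (f v)" unfolding in_Rn_def
      proof (intro allI impI)
        fix i assume i: "n - 1 \<le> i"
        show "f v i = 0"
        proof (cases "n = 2")
          case True
          then have "i \<noteq> 0" "v \<noteq> 2" using i vn by auto
          then show ?thesis by (simp add: f_def)
        next
          case False
          then have "n = 3" using n by simp
          then have "i \<noteq> 0" "i \<noteq> 1" using i by auto
          then show ?thesis by (simp add: f_def)
        qed
      qed
    qed
    show "in_Rn (n - 1) c" by (simp add: in_Rn_def c_def)
    show "0 \<le> r" using r by simp
    show "\<forall>v\<in>S_vert n. (\<Sum>i<n - 1. (f v i - c i)^2) = r^2"
    proof
      fix v assume v: "v \<in> S_vert n"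
      show "(\<Sum>i<n - 1. (f v i - c i)^2) = r^2"
      proof (cases "n = 2")
        case True
        then have "v < 2" using v by (simp add: S_vert_def)
        then have "v = 0 \<or> v = 1" by auto
        then show ?thesis using True by (auto simp: f_def c_def)
      next
        case False
        then have n3: "n = 3" using n by simp
        then have "v < 3" using v by (simp add: S_vert_def)
        then have "v = 0 \<or> v = 1 \<or> v = 2" by auto
        moreover have "{..<2::nat} = {0,1}" by auto
        ultimately show ?thesis using n3 by (auto simp: f_def c_def)
      qed
    qed
    show "\<forall>u\<in>S_vert n. \<forall>v\<in>S_vert n. S_adj n u v \<longrightarrow> (\<Sum>i<n - 1. (f u i - f v i)^2) = 1"
      using noE by simp
  qed
qed

lemma delta_sum:
  fixes a b :: real
  assumes "u < m"
  shows "(\<Sum>j<m. ((if j = u then a else 0) - b)^2) = a^2 - 2*a*b + real m * b^2"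
proof -
  have "(\<Sum>j<m. ((if j = u then a else 0) - b)^2) = (\<Sum>j<m. (if j = u then a^2 - 2*a*b else 0) + b^2)"
    by (intro sum.cong refl) (auto simp: power2_eq_square algebra_simps)
  also have "\<dots> = a^2 - 2*a*b + real m * b^2"
    using assms by (simp add: sum.distrib)
  finally show ?thesis .
qed

lemma delta2_sum:
  fixes a :: real and u v m :: nat
  assumes "u < m" "v < m" "u \<noteq> v"
  shows "(\<Sum>j<m. ((if j = u then a else 0) - (if j = v then a else 0))^2) = 2 * a^2"
proof -
  have "(\<Sum>j<m. ((if j = u then a else 0) - (if j = v then a else 0))^2)
      = (\<Sum>j<m. (if j = u then a^2 else 0) + (if j = v then a^2 else 0))"
    using assms by (intro sum.cong refl) auto
  also have "\<dots> = (\<Sum>j<m. if j = u then a^2 else 0) + (\<Sum>j<m. if j = v then a^2 else 0)"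
    by (rule sum.distrib)
  also have "\<dots> = 2 * a^2" using assms(1,2) by simp
  finally show ?thesis .
qed

lemma sum_split2: "(\<Sum>i<m+2. F i) = (\<Sum>i<m. F i) + F m + F (Suc m)" for F :: "nat \<Rightarrow> real"
proof -
  have "m + 2 = Suc (Suc m)" by simp
  then show ?thesis by simp
qed

lemma alg1:
  fixes M p q :: real
  assumes "M > 0"
  shows "p^2 - 2*p*(p/M + q) + M*(p/M+q)^2 = p^2 - p^2/M + M*q^2"
proof -
  define y where "y = p/M"
  have pp: "p = M*y" using assms by (simp add: y_def)
  have "p^2/M = M*y^2" using assms by (simp add: pp power2_eq_square)
  then show ?thesis unfolding y_def[symmetric] by (simp add: pp power2_eq_square algebra_simps)
qed
lemma t1: assumes "(M::real) > 0" shows "M/(2*(M+1)) - 1/2 + 1/(2*M) = 1/(2*M*(M+1))"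
proof -
  have "M+1 > 0" "M*(M+1) > 0" using assms by auto
  then show ?thesis using assms by (simp add: field_simps)
qed
lemma t2: "(M::real) > 0 \<Longrightarrow> c > 0 \<Longrightarrow> 2*M*(1/(2*M^2*c))*c = 1/M"
  by (simp add: field_simps power2_eq_square)
lemma t3: "(M::real) > 0 \<Longrightarrow> c > 0 \<Longrightarrow> M * (1/(2*M^2*c))^2 = 1/(4*M^2*(M*c^2))"
  by (simp add: field_simps power2_eq_square)
lemma t4: assumes "(M::real) > 0" shows "4*M^2 * (1/(2*M*(M+1))) = 2*M/(M+1)"
proof -
  have "M+1 > 0" "M*(M+1) > 0" using assms by auto
  then show ?thesis using assms by (simp add: field_simps power2_eq_square)
qed
lemma t5: assumes "(M::real) > 0" shows "inverse (2*M/(M+1)) = 1/2 + 1/(2*M)"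
proof -
  have "M+1 > 0" "M*(M+1) > 0" using assms by auto
  then show ?thesis using assms by (simp add: field_simps)
qed
lemma t6: "(M::real) > 0 \<Longrightarrow> 1/2 + 1/(2*M) - 1/M = 1/2 - 1/(2*M)"
  by (simp add: field_simps)
lemma t7: "(M::real) > 0 \<Longrightarrow> D > 0 \<Longrightarrow> M * (sqrt (D/M))^2 = D"
  by simp


lemma big_emb:
  fixes m :: nat and r :: real
  assumes m1: "1 \<le> m" and rgt: "real m / (2*(real m+1)) < r^2" and r0: "0<r"
  shows "spherical_embedding {0..<m+3} (S_adj (m+3)) (m+2) r"
proof -
  define M where "M = real m"
  have mpos: "M > 0" using m1 by (simp add: M_def)
  define sq where "sq = sqrt (1/2::real)"
  have sq2: "sq^2 = 1/2" by (simp add: sq_def)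
  have sq0: "sq > 0" by (simp add: sq_def)
  define D where "D = r^2 - (1/2 - 1/(2*M))"
  have Dgt: "D > 1/(2*M*(M+1))"
  proof -
    have rgt': "M/(2*(M+1)) < r^2" using rgt by (simp add: M_def)
    show ?thesis using rgt' t1[OF mpos] unfolding D_def by linarith
  qed
  have D0: "D > 0" by (rule less_trans[OF _ Dgt]) (use mpos in simp)
  define mc where "mc = sqrt (D / M)"
  have mc0: "mc > 0" using D0 mpos by (simp add: mc_def)
  have mcsq: "M * mc^2 = D" unfolding mc_def by (rule t7[OF mpos D0])
  define mx where "mx = 1/(2*M^2*mc)"
  have mxmc: "2*M*mx*mc = 1/M" unfolding mx_def by (rule t2[OF mpos mc0])
  have mmx: "M * mx^2 = 1/(4*M^2*D)"
    unfolding mx_def mcsq[symmetric] by (rule t3[OF mpos mc0])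
  define S2 where "S2 = 1/2 + 1/(2*M) - M * mx^2"
  have S2pos: "S2 > 0"
  proof -
    have "4*M^2 * (1/(2*M*(M+1))) < 4*M^2*D"
      by (rule mult_strict_left_mono[OF Dgt]) (use mpos in simp)
    then have lt: "2*M/(M+1) < 4*M^2*D" using t4[OF mpos] by simp
    have p: "0 < 2*M/(M+1)" using mpos by simp
    have "inverse (4*M^2*D) < inverse (2*M/(M+1))"
      by (rule less_imp_inverse_less[OF lt p])
    then have "1/(4*M^2*D) < 1/2 + 1/(2*M)" using t5[OF mpos] by (simp add: inverse_eq_divide)
    then show ?thesis unfolding S2_def mmx by simp
  qed
  define \<sigma> where "\<sigma> = sqrt S2"
  have \<sigma>0: "\<sigma> > 0" using S2pos by (simp add: \<sigma>_def)
  have \<sigma>sq: "\<sigma>^2 = S2" using S2pos by (simp add: \<sigma>_def)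
  define lc where "lc = sq/M + mc"
  define lx where "lx = sq/M + mx"
  define hd where "hd u j = (if u < m then (if j = u then sq else 0) else lx)" for u j :: nat
  define f where "f u = (\<lambda>j. if j < m then hd u j else if j = m then (if u = m then \<sigma> else if u = m+1 then -\<sigma> else 0)
       else if j = Suc m then (if u = m+2 then \<sigma> else 0) else 0)" for u
  define c where "c = (\<lambda>j. if j < m then lc else (0::real))"
  have fsum: "(\<Sum>j<m+2. (f u j - f v j)^2) = (\<Sum>j<m. (hd u j - hd v j)^2) + (f u m - f v m)^2 + (f u (Suc m) - f v (Suc m))^2" for u v
  proof -
    have "(\<Sum>j<m. (f u j - f v j)^2) = (\<Sum>j<m. (hd u j - hd v j)^2)"
      by (intro sum.cong refl) (simp add: f_def)
    then show ?thesis by (simp add: sum_split2)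
  qed
  have csum: "(\<Sum>j<m+2. (f u j - c j)^2) = (\<Sum>j<m. (hd u j - lc)^2) + (f u m)^2 + (f u (Suc m))^2" for u
  proof -
    have "(\<Sum>j<m. (f u j - c j)^2) = (\<Sum>j<m. (hd u j - lc)^2)"
      by (intro sum.cong refl) (simp add: f_def c_def)
    then show ?thesis by (simp add: sum_split2 c_def)
  qed
  have indep: "(f v m)^2 + (f v (Suc m))^2 = S2" if "m \<le> v" "v < m+3" for v
  proof -
    have "v = m \<or> v = m+1 \<or> v = m+2" using that by auto
    then show ?thesis using \<sigma>sq by (auto simp: f_def)
  qed
  have d1: "(\<Sum>j<m+2. (f u j - f v j)^2) = 1" if uv: "u < m" "v < m+3" "u \<noteq> v" for u v
  proof (cases "v < m")
    case True
    have "(\<Sum>j<m. (hd u j - hd v j)^2) = 2 * sq^2"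
      unfolding hd_def using uv True by (simp add: delta2_sum)
    then show ?thesis unfolding fsum using True uv sq2 by (simp add: f_def)
  next
    case False
    have "(\<Sum>j<m. (hd u j - hd v j)^2) = sq^2 - 2* sq*lx + M * lx^2"
      unfolding hd_def M_def using uv False by (simp add: delta_sum)
    also have "\<dots> = sq^2 - sq^2/M + M*mx^2"
      unfolding lx_def by (rule alg1[OF mpos])
    finally have h: "(\<Sum>j<m. (hd u j - hd v j)^2) = 1/2 - 1/(2*M) + M*mx^2"
      using sq2 by simp
    have "(f u m - f v m)^2 + (f u (Suc m) - f v (Suc m))^2 = (f v m)^2 + (f v (Suc m))^2"
      using uv by (simp add: f_def power2_commute)
    also have "\<dots> = S2" using indep[of v] False uv by simp
    finally have "(f u m - f v m)^2 + (f u (Suc m) - f v (Suc m))^2 = S2" .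
    then show ?thesis unfolding fsum using h by (simp add: S2_def)
  qed
  have sph: "(\<Sum>j<m+2. (f v j - c j)^2) = r^2" if v: "v < m+3" for v
  proof (cases "v < m")
    case True
    have "(\<Sum>j<m. (hd v j - lc)^2) = sq^2 - 2* sq*lc + M * lc^2"
      unfolding hd_def M_def using True by (simp add: delta_sum)
    also have "\<dots> = sq^2 - sq^2/M + M*mc^2"
      unfolding lc_def by (rule alg1[OF mpos])
    finally have h: "(\<Sum>j<m. (hd v j - lc)^2) = 1/2 - 1/(2*M) + D"
      using sq2 mcsq by simp
    then show ?thesis unfolding csum using True by (simp add: f_def D_def)
  next
    case False
    have "(\<Sum>j<m. (hd v j - lc)^2) = M * (mx - mc)^2"
      unfolding hd_def lx_def lc_def M_def using False by simp
    also have "\<dots> = M * mx^2 - 2*M*mx*mc + M * mc^2"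
      by (simp add: power2_eq_square algebra_simps)
    finally have h: "(\<Sum>j<m. (hd v j - lc)^2) = M * mx^2 - 1/M + D"
      using mxmc mcsq by simp
    have "1/2 + 1/(2*M) - 1/M = 1/2 - 1/(2*M)" by (rule t6[OF mpos])
    then show ?thesis unfolding csum using h indep[of v] False v by (simp add: S2_def D_def)
  qed
  have inj: "inj_on f {0..<m+3}"
  proof (rule inj_onI, rule ccontr)
    fix u v assume u: "u \<in> {0..<m+3}" and v: "v \<in> {0..<m+3}" and e: "f u = f v" and ne: "u \<noteq> v"
    show False
    proof (cases "u < m \<or> v < m")
      case True
      have "(\<Sum>j<m+2. (f u j - f v j)^2) = 1"
      proof (cases "u < m")
        case True then show ?thesis using d1 u v ne by simp
      next
        case False
        then have "v < m" using \<open>u < m \<or> v < m\<close> by simp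
        then have "(\<Sum>j<m+2. (f v j - f u j)^2) = 1" using d1 u v ne by simp
        then show ?thesis by (simp add: power2_commute)
      qed
      then show False using e by simp
    next
      case False
      then have "u = m \<or> u = m+1 \<or> u = m+2" "v = m \<or> v = m+1 \<or> v = m+2" using u v by auto
      moreover have "f u m = f v m" "f u (Suc m) = f v (Suc m)" using e by auto
      ultimately show False using ne \<sigma>0 by (auto simp: f_def)
    qed
  qed
  show ?thesis
  proof (rule sph_emb_intro[where f=f and c=c])
    show "inj_on f {0..<m+3}" by (rule inj)
    show "\<forall>v\<in>{0..<m+3}. in_Rn (m+2) (f v)" by (auto simp: in_Rn_def f_def)
    show "in_Rn (m+2) c" by (simp add: in_Rn_def c_def)
    show "0 \<le> r" using r0 by simp
    show "\<forall>v\<in>{0..<m+3}. (\<Sum>i<m+2. (f v i - c i)^2) = r^2" using sph by auto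
    show "\<forall>u\<in>{0..<m+3}. \<forall>v\<in>{0..<m+3}. S_adj (m+3) u v \<longrightarrow> (\<Sum>i<m+2. (f u i - f v i)^2) = 1"
    proof (intro ballI impI)
      fix u v assume u: "u \<in> {0..<m+3}" and v: "v \<in> {0..<m+3}" and a: "S_adj (m+3) u v"
      then have a': "u \<noteq> v" "u < m \<or> v < m" by (auto simp: S_adj_def)
      show "(\<Sum>i<m+2. (f u i - f v i)^2) = 1"
      proof (cases "u < m")
        case True then show ?thesis using d1 u v a' by simp
      next
        case False
        then have "v < m" using a' by simp
        then have "(\<Sum>j<m+2. (f v j - f u j)^2) = 1" using d1 u v a' by simp
        then show ?thesis by (simp add: power2_commute)
      qed
    qed
  qed
qed



lemma nonexist:
  assumes n4: "n \<ge> 4" and rl: "r < (Rfun ^^ (n - 4)) (1/2)"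
  shows "\<not> spherical_embedding (S_vert n) (S_adj n) (n - 1) r"
proof
  assume emb: "spherical_embedding (S_vert n) (S_adj n) (n - 1) r"
  obtain k where n: "n = k + 4" using n4 by (metis add.commute le_iff_add)
  have thr: "(Rfun ^^ (n - 4)) (1/2) = sqrt ((real k + 1) / (2 * (real k + 2)))"
    by (simp add: n Rfun_iter)
  obtain f c where ude: "unit_distance_embedding (S_vert n) (S_adj n) (n - 1) f"
     and sph: "\<forall>v\<in>S_vert n. edist (n - 1) (f v) c = r"
    using emb unfolding spherical_embedding_def by blast
  have "0 \<in> S_vert n" using n by (simp add: S_vert_def)
  then have "edist (n - 1) (f 0) c = r" using sph by blast
  moreover have "edist (n - 1) (f 0) c \<ge> 0" unfolding edist_def
    by (intro real_sqrt_ge_zero sum_nonneg) simp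
  ultimately have r0: "r \<ge> 0" by simp
  define K where "K = k + 2"
  have d: "\<forall>a<K. \<forall>b<K. a \<noteq> b \<longrightarrow> (\<Sum>i<n - 1. (f a i - f b i)^2) = 1"
  proof (intro allI impI)
    fix a b assume a: "a < K" and b: "b < K" and ab: "a \<noteq> b"
    have adj: "S_adj n a b" using a b ab by (auto simp: S_adj_def n K_def)
    have "a \<in> S_vert n" "b \<in> S_vert n" using a b by (auto simp: S_vert_def n K_def)
    then have "edist (n - 1) (f a) (f b) = 1" using ude adj unfolding unit_distance_embedding_def by blast
    then show "(\<Sum>i<n - 1. (f a i - f b i)^2) = 1" using edist_eq_iff[of 1] by simp
  qed
  have s: "\<forall>a<K. (\<Sum>i<n - 1. (f a i - c i)^2) = r^2"
  proof (intro allI impI)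
    fix a assume a: "a < K"
    have "a \<in> S_vert n" using a by (auto simp: S_vert_def n K_def)
    then have "edist (n - 1) (f a) c = r" using sph by blast
    then show "(\<Sum>i<n - 1. (f a i - c i)^2) = r^2" using edist_eq_iff[OF r0] by simp
  qed
  have B: "real K * (real K - 1) \<le> 2 * real K * (real K * r^2)"
    by (rule simplex_bound[OF d s])
  have Kpos: "real K > 0" by (simp add: K_def)
  have B2: "real K - 1 \<le> 2 * real K * r^2"
  proof -
    have "real K * (real K - 1) \<le> real K * (2 * real K * r^2)" using B by (simp add: algebra_simps)
    then show ?thesis using Kpos by (simp add: mult_le_cancel_left_pos)
  qed
  have "sqrt (r^2) < sqrt ((real k + 1) / (2 * (real k + 2)))" using rl thr r0 by simp
  then have "r^2 < (real k + 1) / (2 * (real k + 2))" by (simp only: real_sqrt_less_iff)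
  then have lt: "r^2 * (2 * (real k + 2)) < real k + 1"
    using pos_less_divide_eq[of "2 * (real k + 2)" "r^2" "real k + 1"] by simp
  have KK: "real K = real k + 2" by (simp add: K_def)
  have "2 * real K * r^2 = r^2 * (2 * (real k + 2))" unfolding KK by (simp add: algebra_simps)
  then show False using B2 lt KK by linarith
qed

lemma exist:
  assumes n4: "n \<ge> 4" and rl: "(Rfun ^^ (n - 4)) (1/2) < r"
  shows "spherical_embedding (S_vert n) (S_adj n) (n - 1) r"
proof -
  obtain k where n: "n = k + 4" using n4 by (metis add.commute le_iff_add)
  define m where "m = k + 1"
  have thr: "(Rfun ^^ (n - 4)) (1/2) = sqrt (real m / (2 * (real m + 1)))"
    by (simp add: n Rfun_iter m_def add.commute)
  have "sqrt (real m / (2 * (real m + 1))) \<ge> 0" by simp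
  then have r0: "r > 0" using rl thr by linarith
  have "sqrt (real m / (2 * (real m + 1))) < sqrt (r^2)" using rl thr r0 by simp
  then have rgt: "real m / (2 * (real m + 1)) < r^2" by (simp only: real_sqrt_less_iff)
  have "spherical_embedding {0..<m+3} (S_adj (m+3)) (m+2) r"
    by (rule big_emb) (use rgt r0 m_def in auto)
  moreover have nm: "n = m + 3" by (simp add: n m_def)
  moreover have "S_vert n = {0..<m+3}" "n - 1 = m + 2" by (simp_all add: S_vert_def nm)
  ultimately show ?thesis by simp
qed

theorem mainTheorem19:
  shows "(\<forall>n\<in>{2,3}. \<forall>r::real. 0 < r \<and> r < 1 \<longrightarrow>
            spherical_embedding (S_vert n) (S_adj n) (n - 1) r)
       \<and> (\<forall>n\<ge>4.
            (\<forall>r::real. (Rfun ^^ (n - 4)) (1/2) < r \<and> r < 1 \<longrightarrow>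
               spherical_embedding (S_vert n) (S_adj n) (n - 1) r)
          \<and> (\<forall>r::real. r < (Rfun ^^ (n - 4)) (1/2) \<longrightarrow>
               \<not> spherical_embedding (S_vert n) (S_adj n) (n - 1) r))"
  using small_emb exist nonexist by blast

end
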